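(* For every semi-perfect graph $G$, $$\mu_\alpha(G)=\min\{k\ge 1 : G \text{ has a } k\text{-tight clique partition}\}-1.$$
   Context: All graphs are finite, simple and undirected. For a graph $G$, $\alpha(G)$ is the maximum size of an independent set and $i(G)$ is the minimum size of a maximal (with respect to inclusion) independent set; the independence gap is $\mu_\alpha(G)=\alpha(G)-i(G)$. $\theta(G)$ denotes the minimum number of cliques whose union is $V(G)$. A graph $G$ is semi-perfect if $\alpha(G)=\theta(G)$. A clique partition of $G$ is a set of pairwise disjoint cliques whose union is $V(G)$. For a positive integer $k$, a clique partition of $G$ is $k$-tight if for every $k$ cliques of the partition, their union intersects every maximal independent set of $G$. *)

theory Defs
  imports Main
begin

text \<open>A finite simple graph is given by a finite vertex set V and a symmetric,
irreflexive adjacency relation E (only its restriction to V matters).\<close>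

definition simple_graph :: "'a set \<Rightarrow> ('a \<Rightarrow> 'a \<Rightarrow> bool) \<Rightarrow> bool" where
  "simple_graph V E \<longleftrightarrow> finite V \<and> (\<forall>x\<in>V. \<forall>y\<in>V. E x y \<longrightarrow> E y x) \<and> (\<forall>x\<in>V. \<not> E x x)"

definition indep_set :: "'a set \<Rightarrow> ('a \<Rightarrow> 'a \<Rightarrow> bool) \<Rightarrow> 'a set \<Rightarrow> bool" where
  "indep_set V E S \<longleftrightarrow> S \<subseteq> V \<and> (\<forall>x\<in>S. \<forall>y\<in>S. x \<noteq> y \<longrightarrow> \<not> E x y)"

definition maximal_indep_set :: "'a set \<Rightarrow> ('a \<Rightarrow> 'a \<Rightarrow> bool) \<Rightarrow> 'a set \<Rightarrow> bool" where
  "maximal_indep_set V E S \<longleftrightarrow> indep_set V E S \<and> (\<forall>T. indep_set V E T \<and> S \<subseteq> T \<longrightarrow> T = S)"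

definition indep_number :: "'a set \<Rightarrow> ('a \<Rightarrow> 'a \<Rightarrow> bool) \<Rightarrow> nat" where
  "indep_number V E = Max (card ` {S. indep_set V E S})"

definition indep_domination_number :: "'a set \<Rightarrow> ('a \<Rightarrow> 'a \<Rightarrow> bool) \<Rightarrow> nat" where
  "indep_domination_number V E = Min (card ` {S. maximal_indep_set V E S})"

text \<open>independence gap mu_alpha(G) = alpha(G) - i(G)\<close>
definition indep_gap :: "'a set \<Rightarrow> ('a \<Rightarrow> 'a \<Rightarrow> bool) \<Rightarrow> int" where
  "indep_gap V E = int (indep_number V E) - int (indep_domination_number V E)"

definition clique :: "'a set \<Rightarrow> ('a \<Rightarrow> 'a \<Rightarrow> bool) \<Rightarrow> 'a set \<Rightarrow> bool" where
  "clique V E C \<longleftrightarrow> C \<subseteq> V \<and> (\<forall>x\<in>C. \<forall>y\<in>C. x \<noteq> y \<longrightarrow> E x y)"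

definition clique_cover_number :: "'a set \<Rightarrow> ('a \<Rightarrow> 'a \<Rightarrow> bool) \<Rightarrow> nat" where
  "clique_cover_number V E = Min {card \<C> | \<C>. (\<forall>C\<in>\<C>. clique V E C) \<and> \<Union>\<C> = V}"

definition semi_perfect :: "'a set \<Rightarrow> ('a \<Rightarrow> 'a \<Rightarrow> bool) \<Rightarrow> bool" where
  "semi_perfect V E \<longleftrightarrow> indep_number V E = clique_cover_number V E"

definition clique_partition :: "'a set \<Rightarrow> ('a \<Rightarrow> 'a \<Rightarrow> bool) \<Rightarrow> 'a set set \<Rightarrow> bool" where
  "clique_partition V E P \<longleftrightarrow> (\<forall>C\<in>P. clique V E C \<and> C \<noteq> {}) \<and> pairwise disjnt P \<and> \<Union>P = V"

definition tight_clique_partition :: "'a set \<Rightarrow> ('a \<Rightarrow> 'a \<Rightarrow> bool) \<Rightarrow> nat \<Rightarrow> 'a set set \<Rightarrow> bool" where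
  "tight_clique_partition V E k P \<longleftrightarrow> clique_partition V E P \<and>
     (\<forall>Q. Q \<subseteq> P \<and> card Q = k \<longrightarrow> (\<forall>S. maximal_indep_set V E S \<longrightarrow> \<Union>Q \<inter> S \<noteq> {}))"

end

theory Submission
  imports Defs
begin

lemma cover_to_partition:
  assumes "finite \<C>" "\<forall>C\<in>\<C>. clique V E C"
  shows "\<exists>P. (\<forall>C\<in>P. clique V E C \<and> C \<noteq> {}) \<and> pairwise disjnt P \<and> \<Union>P = \<Union>\<C>
             \<and> finite P \<and> card P \<le> card \<C>"
  using assms
proof (induction \<C> rule: finite_induct)
  case empty
  then show ?case by auto
next
  case (insert C \<C>)
  then obtain P where P: "\<forall>C\<in>P. clique V E C \<and> C \<noteq> {}" "pairwise disjnt P" "\<Union>P = \<Union>\<C>"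
    "finite P" "card P \<le> card \<C>" by auto
  define D where "D = C - \<Union>\<C>"
  show ?case
  proof (cases "D = {}")
    case True
    then show ?thesis using P insert by (rule_tac x=P in exI) (auto simp: D_def)
  next
    case False
    have cl: "clique V E D" using insert.prems unfolding D_def clique_def by auto
    have dj: "pairwise disjnt (insert D P)" using P(2,3)
      unfolding pairwise_insert D_def disjnt_def by blast
    have "card (insert D P) \<le> card P + 1" using P(4) by (simp add: card_insert_if)
    then show ?thesis using P cl dj False insert
      by (rule_tac x="insert D P" in exI) (auto simp: D_def)
  qed
qed

lemma count_meet:
  assumes "\<forall>C\<in>P. clique V E C" "pairwise disjnt P" "finite P" "indep_set V E S"
    "S \<subseteq> \<Union>P" "finite S"
  shows "card {C\<in>P. C \<inter> S \<noteq> {}} = card S"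
proof -
  define P' where "P' = {C\<in>P. C \<inter> S \<noteq> {}}"
  have S: "S = (\<Union>C\<in>P'. C \<inter> S)" using assms(5) unfolding P'_def by blast
  have fP': "finite P'" using assms(3) unfolding P'_def by simp
  have "card (\<Union>C\<in>P'. C \<inter> S) = (\<Sum>C\<in>P'. card (C \<inter> S))"
    apply (rule card_UN_disjoint[OF fP'])
    using assms(6) apply simp
    using assms(2) unfolding P'_def pairwise_def disjnt_def by blast
  also have "\<dots> = (\<Sum>C\<in>P'. 1)"
  proof (rule sum.cong)
    fix C assume C: "C \<in> P'"
    then obtain x where x: "x \<in> C \<inter> S" unfolding P'_def by blast
    have "C \<inter> S = {x}"
    proof
      show "C \<inter> S \<subseteq> {x}"
      proof
        fix y assume y: "y \<in> C \<inter> S"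
        show "y \<in> {x}"
        proof (rule ccontr)
          assume "y \<notin> {x}"
          then have "y \<noteq> x" by simp
          moreover have "clique V E C" using C assms(1) unfolding P'_def by auto
          ultimately show False using x y assms(4) unfolding clique_def indep_set_def by blast
        qed
      qed
    qed (use x in auto)
    then show "card (C \<inter> S) = 1" by simp
  qed simp
  finally show ?thesis using S unfolding P'_def by simp
qed

theorem mainTheorem5:
  fixes V :: "'a set" and E :: "'a \<Rightarrow> 'a \<Rightarrow> bool"
  assumes "simple_graph V E" and "semi_perfect V E"
  shows "indep_gap V E = int (LEAST k. k \<ge> 1 \<and> (\<exists>P. tight_clique_partition V E k P)) - 1"
proof -
  have fin: "finite V" using assms(1) unfolding simple_graph_def by simp
  define a where "a = indep_number V E"
  define i where "i = indep_domination_number V E"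
  have finI: "finite {S. indep_set V E S}"
    by (rule finite_subset[of _ "Pow V"]) (auto simp: indep_set_def fin)
  have neI: "{} \<in> {S. indep_set V E S}" by (simp add: indep_set_def)
  have a_ge: "card S \<le> a" if "indep_set V E S" for S
    unfolding a_def indep_number_def using finI that by (intro Max_ge) auto
  obtain Sa where Sa: "indep_set V E Sa" "card Sa = a"
  proof -
    have "Max (card ` {S. indep_set V E S}) \<in> card ` {S. indep_set V E S}"
      using finI neI by (intro Max_in) auto
    then show ?thesis using that unfolding a_def indep_number_def by auto
  qed
  have finS: "finite S" if "indep_set V E S" for S
    using that fin finite_subset unfolding indep_set_def by blast
  have "maximal_indep_set V E Sa"
    unfolding maximal_indep_set_def
  proof (intro conjI allI impI)
    fix T assume T: "indep_set V E T \<and> Sa \<subseteq> T"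
    then have "card T \<le> card Sa" using a_ge Sa by auto
    then show "T = Sa" using T finS card_subset_eq by (metis card_mono antisym)
  qed (use Sa in auto)
  then have neM: "{S. maximal_indep_set V E S} \<noteq> {}" by auto
  have finM: "finite {S. maximal_indep_set V E S}"
    by (rule finite_subset[OF _ finI]) (auto simp: maximal_indep_set_def)
  have i_le: "i \<le> card S" if "maximal_indep_set V E S" for S
    unfolding i_def indep_domination_number_def using finM that by (intro Min_le) auto
  obtain S0 where S0: "maximal_indep_set V E S0" "card S0 = i"
  proof -
    have "Min (card ` {S. maximal_indep_set V E S}) \<in> card ` {S. maximal_indep_set V E S}"
      using finM neM by (intro Min_in) auto
    then show ?thesis using that unfolding i_def indep_domination_number_def by auto
  qed
  have ia: "i \<le> a" using S0 a_ge unfolding maximal_indep_set_def by auto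
  define CC where "CC = {card \<C> | \<C>. (\<forall>C\<in>\<C>. clique V E C) \<and> \<Union>\<C> = V}"
  have finCC: "finite CC"
  proof (rule finite_subset[of _ "card ` Pow (Pow V)"])
    show "CC \<subseteq> card ` Pow (Pow V)" unfolding CC_def clique_def by blast
  qed (simp add: fin)
  have "(\<lambda>v. {v}) ` V \<in> {\<C>. (\<forall>C\<in>\<C>. clique V E C) \<and> \<Union>\<C> = V}"
    by (auto simp: clique_def)
  then have neCC: "CC \<noteq> {}" unfolding CC_def by blast
  obtain \<C> where Cc: "\<forall>C\<in>\<C>. clique V E C" "\<Union>\<C> = V" "card \<C> = a"
    using Min_in[OF finCC neCC] assms(2) unfolding semi_perfect_def clique_cover_number_def
      CC_def a_def by auto
  have finC: "finite \<C>"
    by (rule finite_subset[of _ "Pow V"]) (use Cc(1) fin in \<open>auto simp: clique_def\<close>)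
  obtain P0 where P0: "\<forall>C\<in>P0. clique V E C \<and> C \<noteq> {}" "pairwise disjnt P0" "\<Union>P0 = V"
    "finite P0" "card P0 \<le> a"
    using cover_to_partition[OF finC Cc(1)] Cc by auto
  have P0p: "clique_partition V E P0" using P0 unfolding clique_partition_def by auto
  have finP: "finite P" if "clique_partition V E P" for P
    by (rule finite_subset[of _ "Pow V"]) (use that fin in \<open>auto simp: clique_partition_def clique_def\<close>)
  have cnt: "card {C\<in>P. C \<inter> S \<noteq> {}} = card S"
    if "clique_partition V E P" "indep_set V E S" for P S
    using that finP[OF that(1)] finS[OF that(2)]
    by (intro count_meet[where V=V and E=E]) (auto simp: clique_partition_def indep_set_def)
  have split: "card {C\<in>P. C \<inter> S = {}} + card S = card P"
    if "clique_partition V E P" "indep_set V E S" for P S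
  proof -
    have "P = {C\<in>P. C \<inter> S = {}} \<union> {C\<in>P. C \<inter> S \<noteq> {}}" by auto
    then have "card P = card {C\<in>P. C \<inter> S = {}} + card {C\<in>P. C \<inter> S \<noteq> {}}"
      using finP[OF that(1)] by (metis (no_types, lifting) card_Un_disjoint
        disjoint_iff finite_Un mem_Collect_eq)
    then show ?thesis using cnt[OF that] by simp
  qed
  define K where "K = a - i + 1"
  have tK: "K \<ge> 1 \<and> (\<exists>P. tight_clique_partition V E K P)"
  proof (intro conjI exI)
    show "1 \<le> K" unfolding K_def by simp
    show "tight_clique_partition V E K P0"
      unfolding tight_clique_partition_def
    proof (intro conjI allI impI P0p)
      fix Q S assume Q: "Q \<subseteq> P0 \<and> card Q = K" and S: "maximal_indep_set V E S"
      show "\<Union>Q \<inter> S \<noteq> {}"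
      proof
        assume e: "\<Union>Q \<inter> S = {}"
        have iS: "indep_set V E S" using S unfolding maximal_indep_set_def by simp
        have "Q \<subseteq> {C\<in>P0. C \<inter> S = {}}" using Q e by blast
        then have "card Q \<le> card {C\<in>P0. C \<inter> S = {}}" using P0(4) by (intro card_mono) auto
        moreover have "card {C\<in>P0. C \<inter> S = {}} + card S = card P0" using split[OF P0p iS] .
        moreover have "i \<le> card S" using i_le S by simp
        ultimately show False using Q P0(5) ia unfolding K_def by linarith
      qed
    qed
  qed
  have minK: "K \<le> k" if hk: "k \<ge> 1 \<and> (\<exists>P. tight_clique_partition V E k P)" for k
  proof (rule ccontr)
    assume "\<not> K \<le> k"
    then have kl: "k \<le> a - i" unfolding K_def by simp
    obtain P where P: "tight_clique_partition V E k P" using hk by auto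
    have Pp: "clique_partition V E P" using P unfolding tight_clique_partition_def by simp
    have iS0: "indep_set V E S0" using S0 unfolding maximal_indep_set_def by simp
    have "card {C\<in>P. C \<inter> Sa \<noteq> {}} \<le> card P" using finP[OF Pp] by (intro card_mono) auto
    then have aP: "a \<le> card P" using cnt[OF Pp Sa(1)] Sa by simp
    have "k \<le> card {C\<in>P. C \<inter> S0 = {}}" using split[OF Pp iS0] S0 aP kl by linarith
    then obtain Q where Q: "Q \<subseteq> {C\<in>P. C \<inter> S0 = {}}" "card Q = k"
      by (rule obtain_subset_with_card_n)
    have QP: "Q \<subseteq> P" using Q(1) by blast
    have "\<forall>Q. Q \<subseteq> P \<and> card Q = k \<longrightarrow> (\<forall>S. maximal_indep_set V E S \<longrightarrow> \<Union>Q \<inter> S \<noteq> {})"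
      using P unfolding tight_clique_partition_def by simp
    then have "\<Union>Q \<inter> S0 \<noteq> {}" using QP Q(2) S0(1) by blast
    then show False using Q(1) by blast
  qed
  have L: "(LEAST k. k \<ge> 1 \<and> (\<exists>P. tight_clique_partition V E k P)) = K"
    using tK minK by (intro Least_equality) auto
  show ?thesis unfolding L indep_gap_def a_def[symmetric] i_def[symmetric] K_def using ia by simp
qed

end
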